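(* Let $R>0$ and $p>0$. Let $\mathcal G$ be a hypergraph, $U$ a set, $\pi:V(\mathcal G)\to U$ a function with $|\pi(E)|=|E|$ for every $E\in\mathcal G$, and $\vartheta:\pi(\mathcal G)\to\mathbb R_{\ge0}$. If $\Lambda_p(\vartheta)<e(\vartheta)^2/R$, then $\Lambda_p(\vartheta\mathbin{\hat\circ}\pi)<e(\vartheta\mathbin{\hat\circ}\pi)^2/R$.
   Context: A hypergraph is identified with its edge set; $\pi(\mathcal G)=\{\pi(E):E\in\mathcal G\}$ with vertex set $\pi(V(\mathcal G))$. For $\nu:\mathcal G\to\mathbb R_{\ge0}$: $e(\nu)=\sum_E\nu(E)$, $d_\nu(L)=\sum_{E\in\mathcal G,L\subset E}\nu(E)$, $\Lambda_p(\nu)=\sum_{L\subset V(\mathcal G),|L|\ge2}d_\nu(L)^2p^{-|L|}$. The pullback $\vartheta\mathbin{\hat\circ}\pi:\mathcal G\to\mathbb R_{\ge0}$ is $\vartheta\mathbin{\hat\circ}\pi(E)=\vartheta(\pi(E))/|\{E_0\in\mathcal G:\pi(E_0)=\pi(E)\}|$. *)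

theory Defs
  imports Complex_Main
begin

text \<open>A hypergraph is given by a finite vertex set V and an edge set G of subsets of V.
  Weights nu are functions on edges (only values on G matter).\<close>

definition e_wt :: "'a set set \<Rightarrow> ('a set \<Rightarrow> real) \<Rightarrow> real" where
  "e_wt G \<nu> = (\<Sum>E\<in>G. \<nu> E)"

definition deg :: "'a set set \<Rightarrow> ('a set \<Rightarrow> real) \<Rightarrow> 'a set \<Rightarrow> real" where
  "deg G \<nu> L = (\<Sum>E\<in>{E\<in>G. L \<subseteq> E}. \<nu> E)"

definition Lambda :: "real \<Rightarrow> 'a set \<Rightarrow> 'a set set \<Rightarrow> ('a set \<Rightarrow> real) \<Rightarrow> real" where
  "Lambda p V G \<nu> = (\<Sum>L\<in>{L. L \<subseteq> V \<and> card L \<ge> 2}. (deg G \<nu> L)^2 * p powr (- real (card L)))"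

definition pullback :: "('b set \<Rightarrow> real) \<Rightarrow> ('a \<Rightarrow> 'b) \<Rightarrow> 'a set set \<Rightarrow> 'a set \<Rightarrow> real" where
  "pullback \<theta> \<pi> G E = \<theta> (\<pi> ` E) / real (card {E0\<in>G. \<pi> ` E0 = \<pi> ` E})"

end

theory Submission
  imports Defs
begin

lemma group_sum:
  assumes finG: "finite G"
  shows "(\<Sum>E\<in>{E\<in>G. P (\<pi> ` E)}. pullback \<theta> \<pi> G E) = (\<Sum>F\<in>{F\<in>(\<lambda>E. \<pi> ` E) ` G. P F}. \<theta> F)"
proof -
  let ?S = "{E\<in>G. P (\<pi> ` E)}"
  have fS: "finite ?S" using finG by auto
  have "(\<Sum>E\<in>?S. pullback \<theta> \<pi> G E) = (\<Sum>F\<in>(\<lambda>E. \<pi> ` E) ` ?S. \<Sum>E\<in>{x\<in>?S. \<pi> ` x = F}. pullback \<theta> \<pi> G E)"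
    by (rule sum.image_gen[OF fS])
  also have "(\<lambda>E. \<pi> ` E) ` ?S = {F\<in>(\<lambda>E. \<pi> ` E) ` G. P F}" by auto
  also have "(\<Sum>F\<in>{F\<in>(\<lambda>E. \<pi> ` E) ` G. P F}. \<Sum>E\<in>{x\<in>?S. \<pi> ` x = F}. pullback \<theta> \<pi> G E)
      = (\<Sum>F\<in>{F\<in>(\<lambda>E. \<pi> ` E) ` G. P F}. \<theta> F)"
  proof (rule sum.cong[OF refl])
    fix F assume "F \<in> {F\<in>(\<lambda>E. \<pi> ` E) ` G. P F}"
    then obtain E0 where E0: "E0 \<in> G" "F = \<pi> ` E0" "P F" by auto
    define C where "C = {x\<in>G. \<pi> ` x = F}"
    have C: "{x\<in>?S. \<pi> ` x = F} = C" using E0 unfolding C_def by auto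
    have fC: "finite C" using finG unfolding C_def by auto
    have "E0 \<in> C" using E0 unfolding C_def by auto
    hence cpos: "card C > 0" using fC card_gt_0_iff by blast
    have "(\<Sum>E\<in>C. pullback \<theta> \<pi> G E) = (\<Sum>E\<in>C. \<theta> F / real (card C))"
      by (rule sum.cong) (auto simp: pullback_def C_def)
    also have "\<dots> = \<theta> F" using cpos by simp
    finally show "(\<Sum>E\<in>{x\<in>?S. \<pi> ` x = F}. pullback \<theta> \<pi> G E) = \<theta> F" using C by simp
  qed
  finally show ?thesis .
qed

lemma sum_sq_le:
  fixes f :: "'c \<Rightarrow> real"
  assumes "finite A" "\<forall>x\<in>A. f x \<ge> 0"
  shows "(\<Sum>x\<in>A. (f x)^2) \<le> (\<Sum>x\<in>A. f x)^2"
  using assms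
proof (induction A rule: finite_induct)
  case empty then show ?case by simp
next
  case (insert a A)
  have s: "(\<Sum>x\<in>A. f x) \<ge> 0" using insert by (simp add: sum_nonneg)
  have fa: "f a \<ge> 0" using insert by simp
  have "(\<Sum>x\<in>insert a A. (f x)^2) = (f a)^2 + (\<Sum>x\<in>A. (f x)^2)" using insert by simp
  also have "\<dots> \<le> (f a)^2 + (\<Sum>x\<in>A. f x)^2" using insert by simp
  also have "\<dots> \<le> (f a + (\<Sum>x\<in>A. f x))^2" using s fa by (simp add: power2_sum)
  also have "\<dots> = (\<Sum>x\<in>insert a A. f x)^2" using insert by simp
  finally show ?case .
qed

theorem lemma7p4:
  fixes R p :: real and V :: "'a set" and G :: "'a set set"
    and \<pi> :: "'a \<Rightarrow> 'b" and \<theta> :: "'b set \<Rightarrow> real"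
  assumes "R > 0" and "p > 0"
    and "finite V" and "\<forall>E\<in>G. E \<subseteq> V"
    and "\<forall>E\<in>G. card (\<pi> ` E) = card E"
    and "\<forall>F\<in>(\<lambda>E. \<pi> ` E) ` G. \<theta> F \<ge> 0"
    and "Lambda p (\<pi> ` V) ((\<lambda>E. \<pi> ` E) ` G) \<theta> < (e_wt ((\<lambda>E. \<pi> ` E) ` G) \<theta>)^2 / R"
  shows "Lambda p V G (pullback \<theta> \<pi> G) < (e_wt G (pullback \<theta> \<pi> G))^2 / R"
proof -
  define pb where "pb = pullback \<theta> \<pi> G"
  define Gi where "Gi = (\<lambda>E. \<pi> ` E) ` G"
  have finG: "finite G" using assms(3,4) by (meson Pow_iff finite_Pow_iff finite_subset subsetI)
  have e: "e_wt G pb = e_wt Gi \<theta>"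
    using group_sum[OF finG, where P="\<lambda>_. True" and \<pi>=\<pi> and \<theta>=\<theta>] by (simp add: e_wt_def pb_def Gi_def)
  have inj: "inj_on \<pi> E" if "E \<in> G" for E
    using assms(3,4,5) that by (meson eq_card_imp_inj_on finite_subset)
  have pbnn: "pb E \<ge> 0" if "E \<in> G" for E
    using assms(6) that by (auto simp: pb_def pullback_def)
  define d where "d L = deg G pb L" for L
  have dnn: "d L \<ge> 0" for L unfolding d_def deg_def using pbnn by (intro sum_nonneg) auto
  define w where "w L = (d L)^2 * p powr (- real (card L))" for L
  define LS where "LS = {L. L \<subseteq> V \<and> card L \<ge> 2}"
  define LS' where "LS' = {L\<in>LS. d L \<noteq> 0}"
  define MS where "MS = {M. M \<subseteq> \<pi> ` V \<and> card M \<ge> 2}"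
  define dt where "dt M = deg Gi \<theta> M" for M
  define wt where "wt M = (dt M)^2 * p powr (- real (card M))" for M
  have fLS: "finite LS" unfolding LS_def using assms(3) by simp
  have fLS': "finite LS'" unfolding LS'_def using fLS by simp
  have fMS: "finite MS" unfolding MS_def using assms(3) by simp
  have LS'E: "\<exists>E\<in>G. L \<subseteq> E" if "L \<in> LS'" for L
  proof (rule ccontr)
    assume "\<not> ?thesis"
    hence "{E\<in>G. L \<subseteq> E} = {}" by auto
    hence "d L = 0" unfolding d_def deg_def by (metis (no_types) sum.empty)
    thus False using that by (simp add: LS'_def)
  qed
  have cardL: "card (\<pi> ` L) = card L" if hL: "L \<in> LS'" for L
  proof -
    obtain E where "E \<in> G" "L \<subseteq> E" using LS'E[OF hL] by blast
    thus ?thesis using inj by (meson card_image inj_on_subset)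
  qed
  have "Lambda p V G pb = sum w LS" by (simp add: Lambda_def w_def d_def LS_def)
  also have "\<dots> = sum w LS'"
    by (rule sum.mono_neutral_right[OF fLS]) (auto simp: LS'_def w_def)
  also have "\<dots> = (\<Sum>M\<in>(\<lambda>L. \<pi> ` L) ` LS'. \<Sum>L\<in>{L\<in>LS'. \<pi> ` L = M}. w L)"
    by (rule sum.image_gen[OF fLS'])
  also have "\<dots> \<le> (\<Sum>M\<in>(\<lambda>L. \<pi> ` L) ` LS'. wt M)"
  proof (rule sum_mono)
    fix M assume "M \<in> (\<lambda>L. \<pi> ` L) ` LS'"
    define A where "A = {L\<in>LS'. \<pi> ` L = M}"
    have fA: "finite A" using fLS' by (simp add: A_def)
    have "sum w A = (\<Sum>L\<in>A. (d L)^2 * p powr (- real (card M)))"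
      by (rule sum.cong) (auto simp: A_def w_def cardL)
    also have "\<dots> = p powr (- real (card M)) * (\<Sum>L\<in>A. (d L)^2)"
      by (simp add: sum_distrib_left mult.commute)
    also have "\<dots> \<le> p powr (- real (card M)) * (\<Sum>L\<in>A. d L)^2"
      by (rule mult_left_mono[OF sum_sq_le[OF fA]]) (auto simp: dnn)
    also have "\<dots> \<le> p powr (- real (card M)) * (dt M)^2"
    proof (rule mult_left_mono)
      have "(\<Sum>L\<in>A. d L) = (\<Sum>L\<in>A. \<Sum>E\<in>G. if L \<subseteq> E then pb E else 0)"
        by (rule sum.cong) (auto simp: d_def deg_def sum.inter_filter[OF finG])
      also have "\<dots> = (\<Sum>E\<in>G. \<Sum>L\<in>A. if L \<subseteq> E then pb E else 0)"
        by (rule sum.swap)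
      also have "\<dots> \<le> (\<Sum>E\<in>G. if M \<subseteq> \<pi> ` E then pb E else 0)"
      proof (rule sum_mono)
        fix E assume EG: "E \<in> G"
        have "(\<Sum>L\<in>A. if L \<subseteq> E then pb E else 0) = (\<Sum>L\<in>{L\<in>A. L \<subseteq> E}. pb E)"
          by (simp add: sum.inter_filter[OF fA, symmetric])
        also have "\<dots> = real (card {L\<in>A. L \<subseteq> E}) * pb E" by simp
        also have "\<dots> \<le> (if M \<subseteq> \<pi> ` E then pb E else 0)"
        proof (cases "{L\<in>A. L \<subseteq> E} = {}")
          case True
          then show ?thesis using pbnn[OF EG] by (simp only: True card.empty) simp
        next
          case False
          then obtain L where L: "L \<in> A" "L \<subseteq> E" by auto
          hence "M \<subseteq> \<pi> ` E" by (auto simp: A_def)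
          moreover have "card {L\<in>A. L \<subseteq> E} \<le> Suc 0"
          proof (subst card_le_Suc0_iff_eq)
            show "finite {L\<in>A. L \<subseteq> E}" using fA by simp
            show "\<forall>a1\<in>{L\<in>A. L \<subseteq> E}. \<forall>a2\<in>{L\<in>A. L \<subseteq> E}. a1 = a2"
              using inj[OF EG] by (auto simp: A_def inj_on_image_eq_iff)
          qed
          ultimately show ?thesis using pbnn[OF EG]
            by (simp add: mult_left_le_one_le)
        qed
        finally show "(\<Sum>L\<in>A. if L \<subseteq> E then pb E else 0) \<le> (if M \<subseteq> \<pi> ` E then pb E else 0)" .
      qed
      also have "\<dots> = (\<Sum>E\<in>{E\<in>G. M \<subseteq> \<pi> ` E}. pb E)"
        by (simp add: sum.inter_filter[OF finG])
      also have "\<dots> = dt M"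
        using group_sum[OF finG, where P="\<lambda>F. M \<subseteq> F" and \<pi>=\<pi> and \<theta>=\<theta>]
        by (simp add: pb_def dt_def deg_def Gi_def)
      finally have le: "(\<Sum>L\<in>A. d L) \<le> dt M" .
      have "0 \<le> (\<Sum>L\<in>A. d L)" by (simp add: sum_nonneg dnn)
      thus "(\<Sum>L\<in>A. d L)^2 \<le> (dt M)^2" using le by (simp add: power_mono)
    qed simp
    also have "\<dots> = wt M" by (simp add: wt_def)
    finally show "(\<Sum>L\<in>{L\<in>LS'. \<pi> ` L = M}. w L) \<le> wt M" by (simp add: A_def)
  qed
  also have "\<dots> \<le> sum wt MS"
  proof (rule sum_mono2[OF fMS])
    show "(\<lambda>L. \<pi> ` L) ` LS' \<subseteq> MS"
      using cardL by (auto simp: MS_def LS'_def LS_def)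
    show "\<And>b. b \<in> MS - (\<lambda>L. \<pi> ` L) ` LS' \<Longrightarrow> 0 \<le> wt b" by (simp add: wt_def)
  qed
  also have "\<dots> = Lambda p (\<pi> ` V) Gi \<theta>" by (simp add: Lambda_def wt_def dt_def MS_def)
  also have "\<dots> < (e_wt Gi \<theta>)^2 / R" using assms(7) by (simp add: Gi_def)
  finally show ?thesis using e by (simp add: pb_def)
qed

end
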